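(* There is an absolute constant $C>0$ such that for every $n$ and every $n\times n$ random matrix $A$ with i.i.d. entries, $$\mathbb{E}\|A\|_{\infty\to2}\le C\sqrt n\,\mathbb{E}\|A\|_{2\to\infty}+C\,\mathbb{E}\|A\mathbf 1\|_2,$$ where $\mathbf 1=(1,\dots,1)\in\mathbb{R}^n$.
   Context: $\|B\|_{\infty\to2}=\max_{x\in\{-1,1\}^n}\|Bx\|_2$ (the $\ell_\infty\to\ell_2$ operator norm); $\|B\|_{2\to\infty}$ is the $\ell_2\to\ell_\infty$ operator norm, equal to the maximum Euclidean norm of a row of $B$. *)

theory Defs
  imports "HOL-Probability.Probability"
begin

text \<open>An n x n real matrix is a function on index pairs; only entries (i,j) with
  i,j < n are relevant. Vectors are functions on indices < n.\<close>

definition mat_vec :: "nat \<Rightarrow> (nat \<times> nat \<Rightarrow> real) \<Rightarrow> (nat \<Rightarrow> real) \<Rightarrow> nat \<Rightarrow> real" where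
  "mat_vec n A x = (\<lambda>i. \<Sum>j<n. A (i, j) * x j)"

definition euclid_norm :: "nat \<Rightarrow> (nat \<Rightarrow> real) \<Rightarrow> real" where
  "euclid_norm n v = sqrt (\<Sum>i<n. (v i)\<^sup>2)"

definition norm_inf_2 :: "nat \<Rightarrow> (nat \<times> nat \<Rightarrow> real) \<Rightarrow> real" where
  "norm_inf_2 n A = Max ((\<lambda>x. euclid_norm n (mat_vec n A x)) ` ({..<n} \<rightarrow>\<^sub>E {-1, 1}))"

text \<open>ell_2 to ell_infty operator norm: maximal Euclidean norm of a row
  (the 0 is harmless since norms are nonnegative; it only covers n = 0).\<close>
definition norm_2_inf :: "nat \<Rightarrow> (nat \<times> nat \<Rightarrow> real) \<Rightarrow> real" where
  "norm_2_inf n A = Max (insert 0 ((\<lambda>i. euclid_norm n (\<lambda>j. A (i, j))) ` {..<n}))"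

definition iid_matrix :: "nat \<Rightarrow> real measure \<Rightarrow> (nat \<times> nat \<Rightarrow> real) measure" where
  "iid_matrix n \<mu> = PiM ({..<n} \<times> {..<n}) (\<lambda>_. \<mu>)"

end

theory Submission
  imports Defs
begin


lemma sum_PiE_insert:
  assumes "k \<notin> S"
  shows "(\<Sum>\<eta>\<in>PiE (insert k S) F. G \<eta>) = (\<Sum>e\<in>F k. \<Sum>\<eta>\<in>PiE S F. G (\<eta>(k:=e)))"
proof -
  have "(\<Sum>\<eta>\<in>PiE (insert k S) F. G \<eta>) = (\<Sum>p\<in>F k \<times> PiE S F. G ((\<lambda>(y, g). g(k := y)) p))"
    unfolding PiE_insert_eq by (simp add: sum.reindex[OF inj_combinator[OF assms]])
  also have "\<dots> = (\<Sum>e\<in>F k. \<Sum>\<eta>\<in>PiE S F. G (\<eta>(k:=e)))"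
    by (simp add: sum.cartesian_product split_def)
  finally show ?thesis .
qed

lemma cosh_le_exp_sq:
  fixes v :: real
  shows "(exp v + exp (-v)) / 2 \<le> exp (v^2/2)"
proof -
  have key: "(exp v + exp (-v)) / 2 \<le> exp (v^2/2)" if v: "v \<ge> 0" for v :: real
  proof -
    have L: "(-(2* v)) * (1/2) + ln (1 + (1/2) * (exp (2* v) - 1)) \<le> (2* v)^2/8"
      using Hoeffdings_lemma_aux[of "2 * v" "1/2"] v by simp
    have e: "1 + (1/2) * (exp (2* v) - 1) = exp v * ((exp v + exp (-v)) / 2)"
      by (simp add: field_simps exp_minus mult_exp_exp[symmetric] exp_add[symmetric])
    have pos: "0 < (exp v + exp (-v)) / 2" by (simp add: add_pos_pos)
    have "ln ((exp v + exp (-v)) / 2) \<le> v^2/2"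
    proof -
      have "ln (exp v * ((exp v + exp (-v)) / 2)) = v + ln ((exp v + exp (-v)) / 2)"
        using pos by (subst ln_mult) auto
      then show ?thesis using L unfolding e by (simp add: power2_eq_square)
    qed
    then show ?thesis using pos by (metis exp_le_cancel_iff exp_ln)
  qed
  show ?thesis
  proof (cases "v \<ge> 0")
    case True thus ?thesis by (rule key)
  next
    case False
    then have "(exp (-v) + exp (-(-v))) / 2 \<le> exp ((-v)^2/2)" by (intro key) simp
    then show ?thesis by (simp add: add.commute)
  qed
qed

lemma two_point_bound:
  fixes a u c :: real
  assumes "0 \<le> a"
  shows "exp (a*(u + c)^2) + exp (a*(u - c)^2) \<le> 2 * exp (a*(1 + 2* a* c^2)* u^2 + a* c^2)"
proof -
  have e1: "exp (a*(u + c)^2) = exp (a* u^2 + a* c^2) * exp (2* a* c* u)"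
    by (simp add: exp_add[symmetric] power2_eq_square algebra_simps)
  have e2: "exp (a*(u - c)^2) = exp (a* u^2 + a* c^2) * exp (-(2* a* c* u))"
    by (simp add: exp_add[symmetric] power2_eq_square algebra_simps)
  have "exp (2* a* c* u) + exp (-(2* a* c* u)) \<le> 2 * exp ((2* a* c* u)^2/2)"
    using cosh_le_exp_sq[of "2* a* c* u"] by simp
  then have "exp (a*(u + c)^2) + exp (a*(u - c)^2) \<le> exp (a* u^2 + a* c^2) * (2 * exp ((2* a* c* u)^2/2))"
    unfolding e1 e2 by (simp add: distrib_left[symmetric])
  also have "\<dots> = 2 * exp (a*(1 + 2* a* c^2)* u^2 + a* c^2)"
    by (simp add: exp_add[symmetric] power2_eq_square algebra_simps)
  finally show ?thesis .
qed

lemma mgf_rademacher: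
  fixes c :: "nat \<Rightarrow> real"
  assumes "0 \<le> a" "4* a*(\<Sum>j<n. (c j)^2) < 1"
  shows "(\<Sum>\<eta>\<in>{..<n} \<rightarrow>\<^sub>E {-1,1::real}. exp (a*(s + (\<Sum>j<n. \<eta> j * c j))^2))
     \<le> 2^n * exp (a* s^2/(1 - 4* a*(\<Sum>j<n. (c j)^2)) + 2* a*(\<Sum>j<n. (c j)^2))"
  using assms
proof (induction n arbitrary: a s)
  case 0
  then show ?case by simp
next
  case (Suc n)
  define T where "T = (\<Sum>j<n. (c j)^2)"
  define d where "d = c n"
  define a' where "a' = a*(1 + 2* a* d^2)"
  have T0: "0 \<le> T" unfolding T_def by (simp add: sum_nonneg)
  have TS: "(\<Sum>j<Suc n. (c j)^2) = T + d^2" unfolding T_def d_def by simp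
  have a0: "0 \<le> a" by fact
  have h: "4* a*(T + d^2) < 1" using Suc.prems TS by simp
  have d2: "0 \<le> d^2" by simp
  have "4* a* T \<le> 4* a*(T + d^2)" using a0 d2 by (intro mult_left_mono) auto
  then have aT: "4* a* T \<le> 1" using h by linarith
  have a'0: "0 \<le> a'" unfolding a'_def using a0 by simp
  have "8* a^2* d^2* T \<le> 2* a* d^2"
  proof -
    have "8* a^2* d^2* T = (2* a* d^2) * (4* a* T)" by (simp add: power2_eq_square algebra_simps)
    also have "\<dots> \<le> (2* a* d^2) * 1" using aT a0 by (intro mult_left_mono) auto
    finally show ?thesis by simp
  qed
  moreover have "4* a'* T = 4* a* T + 8* a^2* d^2* T" unfolding a'_def by (simp add: algebra_simps power2_eq_square)
  moreover have "4* a*(T + d^2) = 4* a* T + 4* a* d^2" by (simp add: algebra_simps)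
  moreover have "0 \<le> a* d^2" using a0 by simp
  ultimately have a'T: "4* a'* T < 1" using h by linarith
  have split: "(\<Sum>\<eta>\<in>{..<Suc n} \<rightarrow>\<^sub>E {-1,1::real}. exp (a*(s + (\<Sum>j<Suc n. \<eta> j * c j))^2))
     = (\<Sum>\<eta>\<in>{..<n} \<rightarrow>\<^sub>E {-1,1::real}. exp (a*((s + (\<Sum>j<n. \<eta> j * c j)) + d)^2) + exp (a*((s + (\<Sum>j<n. \<eta> j * c j)) - d)^2))"
  proof -
    have "{..<Suc n} = insert n {..<n}" by auto
    then have "(\<Sum>\<eta>\<in>{..<Suc n} \<rightarrow>\<^sub>E {-1,1::real}. exp (a*(s + (\<Sum>j<Suc n. \<eta> j * c j))^2))
       = (\<Sum>e\<in>{-1,1::real}. \<Sum>\<eta>\<in>{..<n} \<rightarrow>\<^sub>E {-1,1::real}. exp (a*(s + (\<Sum>j<Suc n. (\<eta>(n:=e)) j * c j))^2))"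
      by (simp only: sum_PiE_insert[of n "{..<n}"] lessThan_iff less_irrefl not_False_eq_True)
    also have "\<dots> = (\<Sum>e\<in>{-1,1::real}. \<Sum>\<eta>\<in>{..<n} \<rightarrow>\<^sub>E {-1,1::real}. exp (a*((s + (\<Sum>j<n. \<eta> j * c j)) + e * d)^2))"
    proof -
      have "(\<Sum>j<Suc n. (\<eta>(n:=e)) j * c j) = (\<Sum>j<n. \<eta> j * c j) + e * d" for \<eta> and e :: real
      proof -
        have "(\<Sum>j<Suc n. (\<eta>(n:=e)) j * c j) = (\<Sum>j<n. (\<eta>(n:=e)) j * c j) + e * d"
          unfolding d_def by (simp only: sum.lessThan_Suc fun_upd_same)
        also have "(\<Sum>j<n. (\<eta>(n:=e)) j * c j) = (\<Sum>j<n. \<eta> j * c j)"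
          by (intro sum.cong) auto
        finally show ?thesis .
      qed
      then show ?thesis by (simp only: add.assoc)
    qed
    also have "\<dots> = (\<Sum>\<eta>\<in>{..<n} \<rightarrow>\<^sub>E {-1,1::real}. exp (a*((s + (\<Sum>j<n. \<eta> j * c j)) + d)^2) + exp (a*((s + (\<Sum>j<n. \<eta> j * c j)) - d)^2))"
      by (simp add: sum.distrib)
    finally show ?thesis .
  qed
  have "\<dots> \<le> (\<Sum>\<eta>\<in>{..<n} \<rightarrow>\<^sub>E {-1,1::real}. 2 * exp (a'*(s + (\<Sum>j<n. \<eta> j * c j))^2 + a* d^2))"
    unfolding a'_def by (intro sum_mono two_point_bound a0)
  also have "\<dots> = 2 * exp (a* d^2) * (\<Sum>\<eta>\<in>{..<n} \<rightarrow>\<^sub>E {-1,1::real}. exp (a'*(s + (\<Sum>j<n. \<eta> j * c j))^2))"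
  proof -
    have "exp (a'*(s + (\<Sum>j<n. \<eta> j * c j))^2 + a* d^2) = exp (a* d^2) * exp (a'*(s + (\<Sum>j<n. \<eta> j * c j))^2)" for \<eta>
      by (simp only: exp_add mult.commute)
    then show ?thesis by (simp only: sum_distrib_left mult.assoc)
  qed
  also have "\<dots> \<le> 2 * exp (a* d^2) * (2^n * exp (a'* s^2/(1 - 4* a'* T) + 2* a'* T))"
    using Suc.IH[OF a'0, of s] a'T unfolding T_def by (intro mult_left_mono) auto
  also have "\<dots> = 2^Suc n * exp (a'* s^2/(1 - 4* a'* T) + (2* a'* T + a* d^2))"
  proof -
    have "exp (a* d^2) * exp (a'* s^2/(1 - 4* a'* T) + 2* a'* T) = exp (a'* s^2/(1 - 4* a'* T) + (2* a'* T + a* d^2))"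
      by (simp only: exp_add[symmetric] add_ac)
    then show ?thesis by (simp only: power_Suc mult_ac)
  qed
  also have "\<dots> \<le> 2^Suc n * exp (a* s^2/(1 - 4* a*(T + d^2)) + 2* a*(T + d^2))"
  proof -
    have q1: "2* a'* T + a* d^2 \<le> 2* a*(T + d^2)"
    proof -
      have "2* a'* T + a* d^2 = 2* a* T + a* d^2 * (4* a* T) + a* d^2" unfolding a'_def by (simp add: algebra_simps)
      also have "a* d^2 * (4* a* T) \<le> a* d^2 * 1" using aT a0 by (intro mult_left_mono) auto
      finally show ?thesis by (simp add: algebra_simps)
    qed
    have p1: "0 < 1 - 4* a'* T" using a'T by simp
    have p2: "0 < 1 - 4* a*(T + d^2)" using h by simp
    have "a'*(1 - 4* a*(T + d^2)) \<le> a*(1 - 4* a'* T)"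
    proof -
      have "a'*(1 - 4* a*(T + d^2)) - a*(1 - 4* a'* T) = - a*(2* a* d^2 + 8* a^2* d^2* d^2)"
        unfolding a'_def by (simp add: algebra_simps power2_eq_square)
      also have "\<dots> \<le> 0" using a0 by (simp add: mult_nonneg_nonneg)
      finally show ?thesis by simp
    qed
    then have "a'/(1 - 4* a'* T) \<le> a/(1 - 4* a*(T + d^2))"
      using p1 p2 by (simp add: divide_simps mult.commute)
    then have "a'* s^2/(1 - 4* a'* T) \<le> a* s^2/(1 - 4* a*(T + d^2))"
    proof -
      have "a'* s^2/(1 - 4* a'* T) = (a'/(1 - 4* a'* T)) * s^2" by simp
      also have "\<dots> \<le> (a/(1 - 4* a*(T + d^2))) * s^2" by (rule mult_right_mono) (fact, simp)
      finally show ?thesis by simp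
    qed
    with q1 have "a'* s^2/(1 - 4* a'* T) + (2* a'* T + a* d^2) \<le> a* s^2/(1 - 4* a*(T + d^2)) + 2* a*(T + d^2)"
      by linarith
    then show ?thesis by simp
  qed
  finally have fin: "(\<Sum>\<eta>\<in>{..<n} \<rightarrow>\<^sub>E {-1,1::real}. exp (a*((s + (\<Sum>j<n. \<eta> j * c j)) + d)^2) + exp (a*((s + (\<Sum>j<n. \<eta> j * c j)) - d)^2))
     \<le> 2^Suc n * exp (a* s^2/(1 - 4* a*(T + d^2)) + 2* a*(T + d^2))" .
  show ?case unfolding TS split by (rule fin)
qed


definition signmat :: "(nat \<Rightarrow> nat \<Rightarrow> real) \<Rightarrow> (nat \<times> nat \<Rightarrow> real) \<Rightarrow> nat \<times> nat \<Rightarrow> real" where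
  "signmat \<epsilon> b = (\<lambda>(i,j). \<epsilon> i j * b (i,j))"

abbreviation SV :: "nat \<Rightarrow> (nat \<Rightarrow> real) set" where
  "SV n \<equiv> {..<n} \<rightarrow>\<^sub>E {-1,1::real}"

abbreviation SE :: "nat \<Rightarrow> (nat \<Rightarrow> nat \<Rightarrow> real) set" where
  "SE n \<equiv> {..<n} \<rightarrow>\<^sub>E SV n"

lemma SV_ne: "SV n \<noteq> {}" by (simp add: PiE_eq_empty_iff)
lemma SE_ne: "SE n \<noteq> {}" using SV_ne by (simp add: PiE_eq_empty_iff)
lemma finite_SV: "finite (SV n)" by (intro finite_PiE) auto
lemma finite_SE: "finite (SE n)" using finite_SV by (intro finite_PiE) auto
lemma card_SV: "card (SV n) = 2^n" by (simp add: card_PiE numeral_2_eq_2)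
lemma card_SE: "card (SE n) = (2^n)^n" by (simp add: card_PiE card_SV)

lemma sqrt_Max:
  assumes "finite X" "X \<noteq> {}"
  shows "Max ((\<lambda>x. sqrt (f x)) ` X) = sqrt (Max (f ` X))"
proof -
  have "mono sqrt" by (intro monoI real_sqrt_le_mono)
  then have "sqrt (Max (f ` X)) = Max (sqrt ` (f ` X))"
    using assms by (intro mono_Max_commute) auto
  then show ?thesis by (simp add: image_image)
qed

definition SQ :: "nat \<Rightarrow> (nat \<times> nat \<Rightarrow> real) \<Rightarrow> (nat \<Rightarrow> real) \<Rightarrow> real" where
  "SQ n A x = (\<Sum>i<n. (mat_vec n A x i)^2)"

lemma norm_inf_2_SQ: "norm_inf_2 n A = sqrt (Max ((SQ n A) ` SV n))"
  unfolding norm_inf_2_def euclid_norm_def SQ_def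
  by (rule sqrt_Max[OF finite_SV SV_ne])

lemma SQ_nonneg: "0 \<le> SQ n A x" unfolding SQ_def by (simp add: sum_nonneg)

lemma norm_2_inf_nonneg: "0 \<le> norm_2_inf n b"
  unfolding norm_2_inf_def by (rule Max_ge) auto

lemma row_le:
  assumes "i < n"
  shows "(\<Sum>j<n. (b (i,j))^2) \<le> (norm_2_inf n b)^2"
proof -
  have "euclid_norm n (\<lambda>j. b (i, j)) \<le> norm_2_inf n b"
    unfolding norm_2_inf_def using assms by (intro Max_ge) auto
  then have "sqrt (\<Sum>j<n. (b (i,j))^2) \<le> norm_2_inf n b" unfolding euclid_norm_def .
  then show ?thesis
    by (metis real_le_lsqrt real_sqrt_ge_zero sqrt_le_D sum_nonneg zero_le_power2)
qed

lemma mat_vec_signmat: "mat_vec n (signmat \<epsilon> b) x i = (\<Sum>j<n. \<epsilon> i j * (b (i,j) * x j))"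
  by (simp add: mat_vec_def signmat_def mult.assoc)

lemma row_mgf:
  fixes b :: "nat \<times> nat \<Rightarrow> real"
  assumes i: "i < n" and x: "x \<in> SV n" and R: "0 < norm_2_inf n b"
  defines "lam \<equiv> 1 / (8 * (norm_2_inf n b)^2)"
  shows "(\<Sum>\<eta>\<in>SV n. exp (lam * (\<Sum>j<n. \<eta> j * (b (i,j) * x j))^2)) \<le> 2^n * exp (1/4)"
proof -
  define R where "R = norm_2_inf n b"
  define T where "T = (\<Sum>j<n. (b (i,j) * x j)^2)"
  have xx: "(x j)^2 = 1" if "j < n" for j
  proof -
    have "x j = -1 \<or> x j = 1" using x that by (auto simp: PiE_iff)
    then show ?thesis by auto
  qed
  have "T = (\<Sum>j<n. (b (i,j))^2)" unfolding T_def by (intro sum.cong) (auto simp: power_mult_distrib xx)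
  then have TR: "T \<le> R^2" unfolding R_def using row_le[OF i] by simp
  have T0: "0 \<le> T" unfolding T_def by (simp add: sum_nonneg)
  have R2: "0 < R^2" using R unfolding R_def by simp
  have lamR: "lam * R^2 = 1/8" unfolding lam_def R_def using R2 R_def by simp
  have lam0: "0 \<le> lam" unfolding lam_def by simp
  have "lam * T \<le> lam * R^2" using TR lam0 by (intro mult_left_mono)
  then have lT: "lam * T \<le> 1/8" using lamR by simp
  have "(\<Sum>\<eta>\<in>SV n. exp (lam * (0 + (\<Sum>j<n. \<eta> j * (b (i,j) * x j)))^2))
     \<le> 2^n * exp (lam * 0^2/(1 - 4 * lam * T) + 2 * lam * T)"
    unfolding T_def by (rule mgf_rademacher) (use lam0 lT in \<open>auto simp: T_def\<close>)
  also have "\<dots> \<le> 2^n * exp (1/4)" using lT by simp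
  finally show ?thesis by simp
qed

lemma SE_sum_exp:
  fixes b :: "nat \<times> nat \<Rightarrow> real"
  assumes x: "x \<in> SV n" and R: "0 < norm_2_inf n b"
  defines "lam \<equiv> 1 / (8 * (norm_2_inf n b)^2)"
  shows "(\<Sum>\<epsilon>\<in>SE n. exp (lam * SQ n (signmat \<epsilon> b) x)) \<le> (2^n * exp (1/4))^n"
proof -
  define G where "G = (\<lambda>i \<eta>. exp (lam * (\<Sum>j<n. \<eta> j * (b (i,j) * x j))^2))"
  have "exp (lam * SQ n (signmat \<epsilon> b) x) = (\<Prod>i<n. G i (\<epsilon> i))" for \<epsilon>
    unfolding SQ_def G_def mat_vec_signmat by (simp add: sum_distrib_left exp_sum)
  then have "(\<Sum>\<epsilon>\<in>SE n. exp (lam * SQ n (signmat \<epsilon> b) x)) = (\<Sum>\<epsilon>\<in>SE n. \<Prod>i<n. G i (\<epsilon> i))"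
    by simp
  also have "\<dots> = (\<Prod>i<n. \<Sum>\<eta>\<in>SV n. G i \<eta>)"
    by (rule prod_sum_PiE[symmetric]) (auto simp: finite_SV)
  also have "\<dots> \<le> (\<Prod>i<n. 2^n * exp (1/4))"
  proof -
    have rb: "(\<Sum>\<eta>\<in>SV n. G i \<eta>) \<le> 2^n * exp (1/4)" if "i < n" for i
      unfolding G_def lam_def by (rule row_mgf[OF that x R])
    show ?thesis by (intro prod_mono conjI sum_nonneg rb) (auto simp: G_def)
  qed
  also have "\<dots> = (2^n * exp (1/4))^n" by simp
  finally show ?thesis .
qed

lemma exp_Max_le:
  "exp (lam * Max (SQ n A ` SV n)) \<le> (\<Sum>x\<in>SV n. exp (lam * SQ n A x))"
proof -
  have "Max (SQ n A ` SV n) \<in> SQ n A ` SV n" by (intro Max_in) (auto simp: finite_SV SV_ne)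
  then obtain x0 where x0: "x0 \<in> SV n" "Max (SQ n A ` SV n) = SQ n A x0" by auto
  have "exp (lam * SQ n A x0) \<le> (\<Sum>x\<in>SV n. exp (lam * SQ n A x))"
    by (rule member_le_sum) (auto simp: x0 finite_SV)
  then show ?thesis using x0 by simp
qed

lemma sqrt_le_amgm:
  fixes M t :: real
  assumes "0 \<le> M" "0 < t"
  shows "sqrt M \<le> (M / t + t) / 2"
proof -
  have "0 \<le> (sqrt M - t)^2" by simp
  also have "(sqrt M - t)^2 = M - 2 * t * sqrt M + t^2" using assms by (simp add: power2_eq_square algebra_simps)
  finally have "2 * t * sqrt M \<le> M + t^2" by simp
  then have "sqrt M \<le> (M + t^2) / (2 * t)" using assms by (simp add: field_simps)
  also have "(M + t^2) / (2 * t) = (M / t + t) / 2" using assms by (simp add: field_simps power2_eq_square)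
  finally show ?thesis .
qed

lemma det_bound:
  fixes b :: "nat \<times> nat \<Rightarrow> real"
  shows "(\<Sum>\<epsilon>\<in>SE n. norm_inf_2 n (signmat \<epsilon> b)) \<le> real (card (SE n)) * (4 * sqrt (real n) * norm_2_inf n b)"
proof (cases "norm_2_inf n b = 0")
  case True
  have b0: "b (i,j) = 0" if "i < n" "j < n" for i j
  proof -
    have "(\<Sum>j<n. (b (i,j))^2) \<le> 0" using row_le[OF that(1), of b] True by simp
    then have "(\<Sum>j<n. (b (i,j))^2) = 0" by (simp add: sum_nonneg antisym)
    then show ?thesis using that(2) by (simp add: sum_nonneg_eq_0_iff)
  qed
  have "SQ n (signmat \<epsilon> b) x = 0" for \<epsilon> x
    unfolding SQ_def mat_vec_signmat by (intro sum.neutral) (auto simp: b0)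
  then have "norm_inf_2 n (signmat \<epsilon> b) = 0" for \<epsilon>
    unfolding norm_inf_2_SQ using SV_ne[of n] by (simp add: image_constant_conv)
  then show ?thesis using True by simp
next
  case False
  define R where "R = norm_2_inf n b"
  have R: "0 < R" using False norm_2_inf_nonneg[of n b] unfolding R_def by simp
  define lam where "lam = 1 / (8 * R^2)"
  have lam: "0 < lam" unfolding lam_def using R by simp
  define N where "N = real (card (SE n))"
  have N: "N = (2^n)^n" unfolding N_def card_SE by simp
  have n: "0 < n"
  proof (rule ccontr)
    assume "\<not> 0 < n"
    then have "n = 0" by simp
    then have "R = 0" unfolding R_def norm_2_inf_def by simp
    with R show False by simp
  qed
  define M where "M = (\<lambda>\<epsilon>. Max (SQ n (signmat \<epsilon> b) ` SV n))"
  have M0: "0 \<le> M \<epsilon>" for \<epsilon>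
  proof -
    obtain x where "x \<in> SV n" using SV_ne by auto
    then have "SQ n (signmat \<epsilon> b) x \<le> M \<epsilon>" unfolding M_def by (intro Max_ge) (auto simp: finite_SV)
    then show ?thesis using SQ_nonneg[of n "signmat \<epsilon> b" x] by simp
  qed
  have "(\<Sum>\<epsilon>\<in>SE n. exp (lam * M \<epsilon>)) \<le> (\<Sum>\<epsilon>\<in>SE n. \<Sum>x\<in>SV n. exp (lam * SQ n (signmat \<epsilon> b) x))"
    unfolding M_def by (intro sum_mono exp_Max_le)
  also have "\<dots> = (\<Sum>x\<in>SV n. \<Sum>\<epsilon>\<in>SE n. exp (lam * SQ n (signmat \<epsilon> b) x))"
    by (rule sum.swap)
  also have "\<dots> \<le> (\<Sum>x\<in>SV n. (2^n * exp (1/4))^n)"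
  proof (intro sum_mono)
    fix x assume "x \<in> SV n"
    from SE_sum_exp[OF this, of b] R show "(\<Sum>\<epsilon>\<in>SE n. exp (lam * SQ n (signmat \<epsilon> b) x)) \<le> (2^n * exp (1/4))^n"
      unfolding lam_def R_def by simp
  qed
  also have "\<dots> = 2^n * (2^n * exp (1/4))^n" by (simp add: card_SV)
  also have "\<dots> = N * (2 * exp (1/4))^n" unfolding N by (simp add: power_mult_distrib mult_ac)
  also have "\<dots> \<le> N * (exp 2)^n"
  proof -
    have "1 + 7/4 \<le> exp (7/4::real)" by (rule exp_ge_add_one_self)
    then have "2 * exp (1/4) \<le> exp (7/4) * exp (1/4::real)" by (intro mult_right_mono) auto
    also have "\<dots> = exp 2" by (simp add: exp_add[symmetric])
    finally show ?thesis unfolding N by (intro mult_left_mono power_mono) auto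
  qed
  also have "\<dots> = N * exp (2 * real n)" by (simp add: exp_of_nat_mult[symmetric] mult.commute)
  finally have sumexp: "(\<Sum>\<epsilon>\<in>SE n. exp (lam * M \<epsilon>)) \<le> N * exp (2 * real n)" .
  have pt: "lam * M \<epsilon> \<le> 2 * real n - 1 + exp (lam * M \<epsilon>) / exp (2 * real n)" for \<epsilon>
  proof -
    have "1 + (lam * M \<epsilon> - 2 * real n) \<le> exp (lam * M \<epsilon> - 2 * real n)" by (rule exp_ge_add_one_self)
    then show ?thesis by (simp add: exp_diff)
  qed
  have "lam * (\<Sum>\<epsilon>\<in>SE n. M \<epsilon>) = (\<Sum>\<epsilon>\<in>SE n. lam * M \<epsilon>)" by (simp add: sum_distrib_left)
  also have "\<dots> \<le> (\<Sum>\<epsilon>\<in>SE n. 2 * real n - 1 + exp (lam * M \<epsilon>) / exp (2 * real n))"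
    by (intro sum_mono pt)
  also have "\<dots> = N * (2 * real n - 1) + (\<Sum>\<epsilon>\<in>SE n. exp (lam * M \<epsilon>)) / exp (2 * real n)"
    unfolding N_def by (simp add: sum.distrib sum_divide_distrib)
  also have "\<dots> \<le> N * (2 * real n - 1) + N * exp (2 * real n) / exp (2 * real n)"
    using sumexp by (intro add_left_mono divide_right_mono) auto
  also have "\<dots> = N * (2 * real n)" by (simp add: algebra_simps)
  finally have "lam * (\<Sum>\<epsilon>\<in>SE n. M \<epsilon>) \<le> N * (2 * real n)" .
  then have sumM: "(\<Sum>\<epsilon>\<in>SE n. M \<epsilon>) \<le> N * (16 * real n * R^2)"
    using lam R by (simp add: lam_def field_simps)
  define t where "t = 4 * sqrt (real n) * R"
  have t: "0 < t" unfolding t_def using n R by simp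
  have t2: "t^2 = 16 * real n * R^2" unfolding t_def by (simp add: power_mult_distrib)
  have "(\<Sum>\<epsilon>\<in>SE n. norm_inf_2 n (signmat \<epsilon> b)) = (\<Sum>\<epsilon>\<in>SE n. sqrt (M \<epsilon>))"
    unfolding norm_inf_2_SQ M_def ..
  also have "\<dots> \<le> (\<Sum>\<epsilon>\<in>SE n. (M \<epsilon> / t + t) / 2)"
    by (intro sum_mono sqrt_le_amgm M0 t)
  also have "\<dots> = ((\<Sum>\<epsilon>\<in>SE n. M \<epsilon>) / t + N * t) / 2"
    unfolding N_def by (simp add: sum.distrib sum_divide_distrib[symmetric] add_divide_distrib)
  also have "\<dots> \<le> (N * (16 * real n * R^2) / t + N * t) / 2"
    using sumM t by (intro divide_right_mono add_right_mono) auto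
  also have "\<dots> = N * t" using t unfolding t2[symmetric] by (simp add: field_simps power2_eq_square)
  finally show ?thesis unfolding N_def t_def R_def .
qed


lemma euclid_norm_L2: "euclid_norm n v = L2_set v {..<n}"
  unfolding euclid_norm_def L2_set_def ..

lemma mat_vec_cong: "(\<And>i j. i < n \<Longrightarrow> j < n \<Longrightarrow> A (i,j) = B (i,j)) \<Longrightarrow> i < n \<Longrightarrow> mat_vec n A x i = mat_vec n B x i"
  unfolding mat_vec_def by (intro sum.cong) auto

lemma euclid_norm_cong: "(\<And>i. i < n \<Longrightarrow> v i = w i) \<Longrightarrow> euclid_norm n v = euclid_norm n w"
  unfolding euclid_norm_def by (intro arg_cong[where f=sqrt] sum.cong) auto

lemma norm_inf_2_cong:
  assumes "\<And>i j. i < n \<Longrightarrow> j < n \<Longrightarrow> A (i,j) = B (i,j)"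
  shows "norm_inf_2 n A = norm_inf_2 n B"
  unfolding norm_inf_2_def
  by (intro arg_cong[where f=Max] image_cong refl euclid_norm_cong mat_vec_cong assms) auto

lemma norm_2_inf_cong:
  assumes "\<And>i j. i < n \<Longrightarrow> j < n \<Longrightarrow> A (i,j) = B (i,j)"
  shows "norm_2_inf n A = norm_2_inf n B"
  unfolding norm_2_inf_def
  by (intro arg_cong[where f=Max] arg_cong[where f="insert 0"] image_cong refl euclid_norm_cong assms) auto

lemma euclid_norm_nonneg: "0 \<le> euclid_norm n v" unfolding euclid_norm_def by (simp add: sum_nonneg)

lemma norm_inf_2_ge: "x \<in> SV n \<Longrightarrow> euclid_norm n (mat_vec n A x) \<le> norm_inf_2 n A"
  unfolding norm_inf_2_def by (intro Max_ge) (auto simp: finite_SV)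

lemma norm_inf_2_nonneg: "0 \<le> norm_inf_2 n A"
proof -
  obtain x where "x \<in> SV n" using SV_ne by auto
  from norm_inf_2_ge[OF this] show ?thesis using euclid_norm_nonneg[of n] by (meson order_trans)
qed

lemma norm_inf_2_attained: "\<exists>x\<in>SV n. norm_inf_2 n A = euclid_norm n (mat_vec n A x)"
proof -
  have "norm_inf_2 n A \<in> (\<lambda>x. euclid_norm n (mat_vec n A x)) ` SV n"
    unfolding norm_inf_2_def by (intro Max_in) (auto simp: finite_SV SV_ne)
  then show ?thesis by auto
qed

lemma euclid_norm_ge_inner:
  assumes "euclid_norm n u \<le> 1"
  shows "(\<Sum>i<n. u i * w i) \<le> euclid_norm n w"
proof -
  have "(\<Sum>i<n. u i * w i) \<le> (\<Sum>i<n. \<bar>u i\<bar> * \<bar>w i\<bar>)" by (intro sum_mono) (simp add: abs_mult[symmetric])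
  also have "\<dots> \<le> L2_set u {..<n} * L2_set w {..<n}" by (rule L2_set_mult_ineq)
  also have "\<dots> \<le> 1 * L2_set w {..<n}" using assms unfolding euclid_norm_L2 by (intro mult_right_mono) auto
  finally show ?thesis unfolding euclid_norm_L2 by simp
qed

lemma euclid_norm_triangle: "euclid_norm n (\<lambda>i. v i + w i) \<le> euclid_norm n v + euclid_norm n w"
  unfolding euclid_norm_L2 by (rule L2_set_triangle_ineq)

lemma mean_shift_bound:
  fixes A :: "nat \<times> nat \<Rightarrow> real" and m :: real
  shows "norm_inf_2 n A \<le> norm_inf_2 n (\<lambda>k. A k - m) + real n * sqrt (real n) * \<bar>m\<bar>"
proof -
  obtain x where x: "x \<in> SV n" "norm_inf_2 n A = euclid_norm n (mat_vec n A x)"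
    using norm_inf_2_attained by blast
  have xb: "\<bar>x j\<bar> \<le> 1" if "j < n" for j
  proof -
    have "x j = -1 \<or> x j = 1" using x that by (auto simp: PiE_iff)
    then show ?thesis by auto
  qed
  define w where "w = (\<lambda>i::nat. (\<Sum>j<n. m * x j))"
  have split: "mat_vec n A x i = mat_vec n (\<lambda>k. A k - m) x i + w i" for i
    unfolding mat_vec_def w_def by (simp add: sum.distrib[symmetric] algebra_simps)
  have wb: "\<bar>w i\<bar> \<le> real n * \<bar>m\<bar>" for i
  proof -
    have "\<bar>w i\<bar> \<le> (\<Sum>j<n. \<bar>m * x j\<bar>)" unfolding w_def by (rule sum_abs)
    also have "\<dots> \<le> (\<Sum>j<n. \<bar>m\<bar>)" using xb by (intro sum_mono) (auto simp: abs_mult intro: mult_left_le)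
    finally show ?thesis by simp
  qed
  have "euclid_norm n w \<le> sqrt (real n) * (real n * \<bar>m\<bar>)"
  proof -
    have "euclid_norm n w = L2_set (\<lambda>i. \<bar>w i\<bar>) {..<n}" unfolding euclid_norm_L2 L2_set_def by simp
    also have "\<dots> \<le> L2_set (\<lambda>i. real n * \<bar>m\<bar>) {..<n}" by (intro L2_set_mono wb) auto
    also have "\<dots> = sqrt (real n) * (real n * \<bar>m\<bar>)" by (simp add: L2_set_constant)
    finally show ?thesis .
  qed
  moreover have "euclid_norm n (mat_vec n A x) \<le> euclid_norm n (mat_vec n (\<lambda>k. A k - m) x) + euclid_norm n w"
    unfolding split by (rule euclid_norm_triangle)
  moreover have "euclid_norm n (mat_vec n (\<lambda>k. A k - m) x) \<le> norm_inf_2 n (\<lambda>k. A k - m)"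
    by (rule norm_inf_2_ge[OF x(1)])
  ultimately show ?thesis using x(2) by (simp add: mult_ac)
qed

lemma norm_2_inf_triangle:
  "norm_2_inf n (\<lambda>k. A k - B k) \<le> norm_2_inf n A + norm_2_inf n B"
proof -
  have row: "euclid_norm n (\<lambda>j. A (i,j) - B (i,j)) \<le> norm_2_inf n A + norm_2_inf n B" if "i < n" for i
  proof -
    have "euclid_norm n (\<lambda>j. A (i,j) - B (i,j)) = euclid_norm n (\<lambda>j. A (i,j) + (- B (i,j)))" by simp
    also have "\<dots> \<le> euclid_norm n (\<lambda>j. A (i,j)) + euclid_norm n (\<lambda>j. - B (i,j))" by (rule euclid_norm_triangle)
    also have "euclid_norm n (\<lambda>j. - B (i,j)) = euclid_norm n (\<lambda>j. B (i,j))" unfolding euclid_norm_def by simp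
    also have "euclid_norm n (\<lambda>j. A (i,j)) \<le> norm_2_inf n A" unfolding norm_2_inf_def using that by (intro Max_ge) auto
    also have "euclid_norm n (\<lambda>j. B (i,j)) \<le> norm_2_inf n B" unfolding norm_2_inf_def using that by (intro Max_ge) auto
    finally show ?thesis by simp
  qed
  show ?thesis unfolding norm_2_inf_def[of n "\<lambda>k. A k - B k"]
    using row norm_2_inf_nonneg[of n A] norm_2_inf_nonneg[of n B] by (auto simp: Max_le_iff)
qed


lemma ennreal_integral_le_nn:
  fixes L :: "'b \<Rightarrow> real"
  assumes "integrable N L"
  shows "ennreal (integral\<^sup>L N L) \<le> (\<integral>\<^sup>+y. ennreal (L y) \<partial>N)"
proof -
  have "integral\<^sup>L N L \<le> integral\<^sup>L N (\<lambda>y. max 0 (L y))"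
    using assms by (intro Bochner_Integration.integral_mono) auto
  then have "ennreal (integral\<^sup>L N L) \<le> ennreal (integral\<^sup>L N (\<lambda>y. max 0 (L y)))"
    by (rule ennreal_leI)
  also have "\<dots> = (\<integral>\<^sup>+y. ennreal (max 0 (L y)) \<partial>N)"
    using assms by (intro nn_integral_eq_integral[symmetric]) auto
  also have "\<dots> = (\<integral>\<^sup>+y. ennreal (L y) \<partial>N)" by (simp add: ennreal_max_0)
  finally show ?thesis .
qed

lemma linear_bound_integral:
  fixes B :: "'b \<Rightarrow> nat \<times> nat \<Rightarrow> real"
  assumes N: "prob_space N"
  and Bint: "\<And>i j. i < n \<Longrightarrow> j < n \<Longrightarrow> integrable N (\<lambda>y. B y (i,j))"
  and Bm: "\<And>i j. i < n \<Longrightarrow> j < n \<Longrightarrow> integral\<^sup>L N (\<lambda>y. B y (i,j)) = m"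
  shows "integrable N (\<lambda>y. \<Sum>i<n. u i * mat_vec n (\<lambda>k. A k - B y k) x i)"
    and "integral\<^sup>L N (\<lambda>y. \<Sum>i<n. u i * mat_vec n (\<lambda>k. A k - B y k) x i)
         = (\<Sum>i<n. u i * mat_vec n (\<lambda>k. A k - m) x i)"
proof -
  interpret prob_space N by fact
  have eq: "(\<lambda>y. \<Sum>i<n. u i * mat_vec n (\<lambda>k. A k - B y k) x i)
     = (\<lambda>y. (\<Sum>i<n. \<Sum>j<n. u i * (A (i,j) * x j)) - (\<Sum>i<n. \<Sum>j<n. (u i * x j) * B y (i,j)))"
    unfolding mat_vec_def by (simp add: sum_distrib_left sum_subtractf[symmetric] algebra_simps)
  have int: "integrable N (\<lambda>y. \<Sum>i<n. \<Sum>j<n. (u i * x j) * B y (i,j))"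
    using Bint by (auto intro!: Bochner_Integration.integrable_sum Bochner_Integration.integrable_mult_right)
  show "integrable N (\<lambda>y. \<Sum>i<n. u i * mat_vec n (\<lambda>k. A k - B y k) x i)"
    unfolding eq using int by (intro Bochner_Integration.integrable_diff) auto
  have "integral\<^sup>L N (\<lambda>y. \<Sum>i<n. \<Sum>j<n. (u i * x j) * B y (i,j)) = (\<Sum>i<n. \<Sum>j<n. (u i * x j) * m)"
  proof -
    have e1: "integral\<^sup>L N (\<lambda>y. \<Sum>j<n. (u i * x j) * B y (i,j)) = (\<Sum>j<n. (u i * x j) * m)" if i: "i < n" for i
    proof -
      have "integral\<^sup>L N (\<lambda>y. \<Sum>j<n. (u i * x j) * B y (i,j)) = (\<Sum>j<n. integral\<^sup>L N (\<lambda>y. (u i * x j) * B y (i,j)))"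
        by (rule Bochner_Integration.integral_sum) (simp add: Bint i)
      also have "\<dots> = (\<Sum>j<n. (u i * x j) * m)" using Bm i by (intro sum.cong refl) simp
      finally show ?thesis .
    qed
    have "integral\<^sup>L N (\<lambda>y. \<Sum>i<n. \<Sum>j<n. (u i * x j) * B y (i,j)) = (\<Sum>i<n. integral\<^sup>L N (\<lambda>y. \<Sum>j<n. (u i * x j) * B y (i,j)))"
      by (rule Bochner_Integration.integral_sum) (auto simp: Bint intro!: Bochner_Integration.integrable_sum)
    also have "\<dots> = (\<Sum>i<n. \<Sum>j<n. (u i * x j) * m)" using e1 by (intro sum.cong refl) simp
    finally show ?thesis .
  qed
  note S = this
  define c0 where "c0 = (\<Sum>i<n. \<Sum>j<n. u i * (A (i,j) * x j))"
  have "integral\<^sup>L N (\<lambda>y. c0 - (\<Sum>i<n. \<Sum>j<n. (u i * x j) * B y (i,j)))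
      = integral\<^sup>L N (\<lambda>y. c0) - integral\<^sup>L N (\<lambda>y. \<Sum>i<n. \<Sum>j<n. (u i * x j) * B y (i,j))"
    using int by (intro Bochner_Integration.integral_diff) auto
  also have "\<dots> = c0 - (\<Sum>i<n. \<Sum>j<n. (u i * x j) * m)" using S by (simp add: prob_space)
  also have "\<dots> = (\<Sum>i<n. u i * mat_vec n (\<lambda>k. A k - m) x i)"
    unfolding c0_def mat_vec_def
    by (simp add: sum_distrib_left sum_subtractf[symmetric] algebra_simps)
  finally show "integral\<^sup>L N (\<lambda>y. \<Sum>i<n. u i * mat_vec n (\<lambda>k. A k - B y k) x i)
         = (\<Sum>i<n. u i * mat_vec n (\<lambda>k. A k - m) x i)"
    unfolding eq c0_def .
qed

lemma jensen_inner:
  fixes A :: "nat \<times> nat \<Rightarrow> real" and B :: "'b \<Rightarrow> nat \<times> nat \<Rightarrow> real"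
  assumes N: "prob_space N"
  and Bint: "\<And>i j. i < n \<Longrightarrow> j < n \<Longrightarrow> integrable N (\<lambda>y. B y (i,j))"
  and Bm: "\<And>i j. i < n \<Longrightarrow> j < n \<Longrightarrow> integral\<^sup>L N (\<lambda>y. B y (i,j)) = m"
  shows "ennreal (norm_inf_2 n (\<lambda>k. A k - m)) \<le> (\<integral>\<^sup>+y. ennreal (norm_inf_2 n (\<lambda>k. A k - B y k)) \<partial>N)"
proof -
  obtain x where x: "x \<in> SV n" "norm_inf_2 n (\<lambda>k. A k - m) = euclid_norm n (mat_vec n (\<lambda>k. A k - m) x)"
    using norm_inf_2_attained by blast
  define v where "v = mat_vec n (\<lambda>k. A k - m) x"
  define r where "r = euclid_norm n v"
  show ?thesis
  proof (cases "r = 0")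
    case True
    then show ?thesis using x unfolding v_def r_def by simp
  next
    case False
    have r0: "0 < r" using False euclid_norm_nonneg[of n v] unfolding r_def by simp
    have rsq: "r^2 = (\<Sum>i<n. (v i)^2)" unfolding r_def euclid_norm_def by (simp add: sum_nonneg)
    define u where "u = (\<lambda>i. v i / r)"
    have un: "euclid_norm n u \<le> 1"
    proof -
      have "(\<Sum>i<n. (u i)^2) = (\<Sum>i<n. (v i)^2) / r^2" unfolding u_def by (simp add: power_divide sum_divide_distrib)
      also have "\<dots> = 1" using rsq r0 by (metis div_self less_numeral_extra(3) zero_less_power)
      finally show ?thesis unfolding euclid_norm_def by simp
    qed
    have uv: "(\<Sum>i<n. u i * v i) = r"
    proof -
      have "(\<Sum>i<n. u i * v i) = (\<Sum>i<n. (v i)^2) / r" unfolding u_def by (simp add: sum_divide_distrib power2_eq_square)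
      also have "\<dots> = r^2 / r" using rsq by simp
      also have "\<dots> = r" using r0 by (simp add: power2_eq_square)
      finally show ?thesis .
    qed
    define L where "L = (\<lambda>y. \<Sum>i<n. u i * mat_vec n (\<lambda>k. A k - B y k) x i)"
    have Lint: "integrable N L" unfolding L_def by (rule linear_bound_integral(1)[where N=N and B=B and m=m and n=n and u=u and A=A and x=x, OF N Bint Bm])
    have Lval: "integral\<^sup>L N L = r" unfolding L_def
      using linear_bound_integral(2)[where N=N and B=B and m=m and n=n and u=u and A=A and x=x, OF N Bint Bm] uv unfolding v_def by simp
    have "ennreal (norm_inf_2 n (\<lambda>k. A k - m)) = ennreal (integral\<^sup>L N L)"
      using x Lval unfolding r_def v_def by simp
    also have "\<dots> \<le> (\<integral>\<^sup>+y. ennreal (L y) \<partial>N)" by (rule ennreal_integral_le_nn[OF Lint])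
    also have "\<dots> \<le> (\<integral>\<^sup>+y. ennreal (norm_inf_2 n (\<lambda>k. A k - B y k)) \<partial>N)"
    proof (intro nn_integral_mono ennreal_leI)
      fix y
      have "L y \<le> euclid_norm n (mat_vec n (\<lambda>k. A k - B y k) x)"
        unfolding L_def by (rule euclid_norm_ge_inner[OF un])
      also have "\<dots> \<le> norm_inf_2 n (\<lambda>k. A k - B y k)" by (rule norm_inf_2_ge[OF x(1)])
      finally show "L y \<le> norm_inf_2 n (\<lambda>k. A k - B y k)" .
    qed
    finally show ?thesis .
  qed
qed


lemma meas_norm_inf_2:
  assumes "\<And>i j. i < n \<Longrightarrow> j < n \<Longrightarrow> (\<lambda>\<omega>. F \<omega> (i,j)) \<in> borel_measurable N"
  shows "(\<lambda>\<omega>. norm_inf_2 n (F \<omega>)) \<in> borel_measurable N"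
  unfolding norm_inf_2_def euclid_norm_def mat_vec_def
  apply (intro borel_measurable_Max finite_SV)
  apply (rule measurable_compose[OF _ borel_measurable_sqrt])
  apply (intro borel_measurable_sum borel_measurable_power borel_measurable_times borel_measurable_const)
  using assms by auto

lemma meas_mv1:
  assumes "\<And>i j. i < n \<Longrightarrow> j < n \<Longrightarrow> (\<lambda>\<omega>. F \<omega> (i,j)) \<in> borel_measurable N"
  shows "(\<lambda>\<omega>. euclid_norm n (mat_vec n (F \<omega>) x)) \<in> borel_measurable N"
  unfolding euclid_norm_def mat_vec_def
  apply (rule measurable_compose[OF _ borel_measurable_sqrt])
  apply (intro borel_measurable_sum borel_measurable_power borel_measurable_times borel_measurable_const)
  using assms by auto

lemma meas_norm_2_inf:
  assumes "\<And>i j. i < n \<Longrightarrow> j < n \<Longrightarrow> (\<lambda>\<omega>. F \<omega> (i,j)) \<in> borel_measurable N"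
  shows "(\<lambda>\<omega>. norm_2_inf n (F \<omega>)) \<in> borel_measurable N"
proof (cases "n = 0")
  case True then show ?thesis unfolding norm_2_inf_def by simp
next
  case False
  have e: "norm_2_inf n (F \<omega>) = max 0 (Max ((\<lambda>i. euclid_norm n (\<lambda>j. F \<omega> (i,j))) ` {..<n}))" for \<omega>
    unfolding norm_2_inf_def using False by (subst Max_insert) auto
  show ?thesis unfolding e euclid_norm_def
    apply (intro borel_measurable_max borel_measurable_const borel_measurable_Max finite_lessThan)
    apply (rule measurable_compose[OF _ borel_measurable_sqrt])
    apply (intro borel_measurable_sum borel_measurable_power)
    using assms by auto
qed

definition sh :: "nat \<Rightarrow> nat \<times> nat \<Rightarrow> nat \<times> nat" where
  "sh n k = (fst k + n, snd k)"

definition piswap :: "nat \<Rightarrow> (nat \<Rightarrow> nat \<Rightarrow> real) \<Rightarrow> nat \<times> nat \<Rightarrow> nat \<times> nat" where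
  "piswap n \<epsilon> k = (if fst k < n \<and> snd k < n \<and> \<epsilon> (fst k) (snd k) = -1 then (fst k + n, snd k)
     else if n \<le> fst k \<and> fst k < 2*n \<and> snd k < n \<and> \<epsilon> (fst k - n) (snd k) = -1 then (fst k - n, snd k) else k)"

lemma Jx_eq: "sh n ` ({..<n} \<times> {..<n}) = {n..<2*n} \<times> {..<n}"
proof (intro set_eqI iffI)
  fix k assume "k \<in> sh n ` ({..<n} \<times> {..<n})" then show "k \<in> {n..<2*n} \<times> {..<n}" by (auto simp: sh_def)
next
  fix k assume k: "k \<in> {n..<2*n} \<times> {..<n}"
  then have "k = sh n (fst k - n, snd k)" by (auto simp: sh_def)
  moreover have "(fst k - n, snd k) \<in> {..<n} \<times> {..<n}" using k by auto
  ultimately show "k \<in> sh n ` ({..<n} \<times> {..<n})" by blast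
qed

lemma Kx_eq: "({..<n} \<times> {..<n}) \<union> sh n ` ({..<n} \<times> {..<n}) = {..<2*n} \<times> {..<n}"
  unfolding Jx_eq by auto

lemma sh_inj: "inj_on (sh n) S" unfolding sh_def inj_on_def by auto

lemma IJ_disj: "({..<n} \<times> {..<n}) \<inter> sh n ` ({..<n} \<times> {..<n}) = {}"
  unfolding Jx_eq by auto

lemma piswap_in: "k \<in> {..<2*n} \<times> {..<n} \<Longrightarrow> piswap n \<epsilon> k \<in> {..<2*n} \<times> {..<n}"
  unfolding piswap_def by auto

lemma piswap_invol: "k \<in> {..<2*n} \<times> {..<n} \<Longrightarrow> piswap n \<epsilon> (piswap n \<epsilon> k) = k"
  unfolding piswap_def by (cases k) auto

lemma piswap_inj: "inj_on (piswap n \<epsilon>) ({..<2*n} \<times> {..<n})"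
  by (metis inj_onI piswap_invol)

lemma meas_comp:
  assumes "sets \<mu> = sets borel" "k \<in> S"
  shows "(\<lambda>\<omega>. \<omega> k) \<in> borel_measurable (PiM S (\<lambda>_. \<mu>))"
proof -
  have "(\<lambda>\<omega>. \<omega> k) \<in> measurable (PiM S (\<lambda>_. \<mu>)) \<mu>"
    using measurable_component_singleton[OF assms(2), of "\<lambda>_. \<mu>"] by simp
  then show ?thesis using measurable_cong_sets[OF refl assms(1)] by metis
qed

lemma comp_integral:
  fixes \<mu> :: "real measure"
  assumes "prob_space \<mu>" "sets \<mu> = sets borel" "k \<in> S" "integrable \<mu> (\<lambda>x. x)"
  shows "integrable (PiM S (\<lambda>_. \<mu>)) (\<lambda>\<omega>. \<omega> k)"
    and "integral\<^sup>L (PiM S (\<lambda>_. \<mu>)) (\<lambda>\<omega>. \<omega> k) = integral\<^sup>L \<mu> (\<lambda>x. x)"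
proof -
  have D: "distr (PiM S (\<lambda>_. \<mu>)) \<mu> (\<lambda>\<omega>. \<omega> k) = \<mu>"
    using distr_PiM_component[of S "\<lambda>_. \<mu>" k] assms by simp
  have m: "(\<lambda>\<omega>. \<omega> k) \<in> measurable (PiM S (\<lambda>_. \<mu>)) \<mu>"
    using measurable_component_singleton[OF assms(3), of "\<lambda>_. \<mu>"] by simp
  have b: "(\<lambda>x::real. x) \<in> borel_measurable \<mu>"
    by (rule measurable_ident_sets[OF assms(2)])
  show "integrable (PiM S (\<lambda>_. \<mu>)) (\<lambda>\<omega>. \<omega> k)"
    using integrable_distr_eq[OF m b] D assms(4) by simp
  show "integral\<^sup>L (PiM S (\<lambda>_. \<mu>)) (\<lambda>\<omega>. \<omega> k) = integral\<^sup>L \<mu> (\<lambda>x. x)"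
    using integral_distr[OF m b] D by simp
qed

lemma nn_comp:
  fixes \<mu> :: "real measure"
  assumes "prob_space \<mu>" "sets \<mu> = sets borel" "k \<in> S"
  shows "(\<integral>\<^sup>+\<omega>. ennreal \<bar>\<omega> k\<bar> \<partial>PiM S (\<lambda>_. \<mu>)) = (\<integral>\<^sup>+x. ennreal \<bar>x\<bar> \<partial>\<mu>)"
proof -
  have D: "distr (PiM S (\<lambda>_. \<mu>)) \<mu> (\<lambda>\<omega>. \<omega> k) = \<mu>"
    using distr_PiM_component[of S "\<lambda>_. \<mu>" k] assms by simp
  have m: "(\<lambda>\<omega>. \<omega> k) \<in> measurable (PiM S (\<lambda>_. \<mu>)) \<mu>"
    using measurable_component_singleton[OF assms(3), of "\<lambda>_. \<mu>"] by simp
  have b0: "(\<lambda>x::real. ennreal \<bar>x\<bar>) \<in> borel_measurable borel" by measurable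
  have b: "(\<lambda>x::real. ennreal \<bar>x\<bar>) \<in> borel_measurable \<mu>"
    using measurable_cong_sets[OF assms(2) refl] b0 by metis
  have "(\<integral>\<^sup>+x. ennreal \<bar>x\<bar> \<partial>distr (PiM S (\<lambda>_. \<mu>)) \<mu> (\<lambda>\<omega>. \<omega> k)) = (\<integral>\<^sup>+\<omega>. ennreal \<bar>\<omega> k\<bar> \<partial>PiM S (\<lambda>_. \<mu>))"
    by (rule nn_integral_distr[OF m]) (simp add: D b)
  then show ?thesis using D by simp
qed

lemma reindex_distr:
  assumes "prob_space \<mu>" "inj_on f I" "f \<in> I \<rightarrow> K"
  shows "distr (PiM K (\<lambda>_. \<mu>)) (PiM I (\<lambda>_. \<mu>)) (\<lambda>\<omega>. \<lambda>k\<in>I. \<omega> (f k)) = PiM I (\<lambda>_. \<mu>)"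
  using distr_PiM_reindex[of K "\<lambda>_. \<mu>" f I] assms by simp

lemma reindex_meas:
  assumes "f \<in> I \<rightarrow> K"
  shows "(\<lambda>\<omega>. \<lambda>k\<in>I. \<omega> (f k)) \<in> measurable (PiM K (\<lambda>_. \<mu>)) (PiM I (\<lambda>_. \<mu>))"
  using assms by (intro measurable_restrict measurable_component_singleton) auto

lemma reindex_nn:
  assumes "prob_space \<mu>" "inj_on f I" "f \<in> I \<rightarrow> K" "g \<in> borel_measurable (PiM I (\<lambda>_. \<mu>))"
  shows "(\<integral>\<^sup>+\<omega>. g (\<lambda>k\<in>I. \<omega> (f k)) \<partial>PiM K (\<lambda>_. \<mu>)) = (\<integral>\<^sup>+x. g x \<partial>PiM I (\<lambda>_. \<mu>))"
proof -
  have "(\<integral>\<^sup>+x. g x \<partial>PiM I (\<lambda>_. \<mu>)) = (\<integral>\<^sup>+x. g x \<partial>distr (PiM K (\<lambda>_. \<mu>)) (PiM I (\<lambda>_. \<mu>)) (\<lambda>\<omega>. \<lambda>k\<in>I. \<omega> (f k)))"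
    using reindex_distr[OF assms(1-3)] by simp
  also have "\<dots> = (\<integral>\<^sup>+\<omega>. g (\<lambda>k\<in>I. \<omega> (f k)) \<partial>PiM K (\<lambda>_. \<mu>))"
    by (rule nn_integral_distr[OF reindex_meas[OF assms(3)]]) (simp add: reindex_distr[OF assms(1-3)] assms(4))
  finally show ?thesis ..
qed


lemma SE_sign: "\<epsilon> \<in> SE n \<Longrightarrow> i < n \<Longrightarrow> j < n \<Longrightarrow> \<epsilon> i j = -1 \<or> \<epsilon> i j = 1"
  by (auto simp: PiE_iff)

lemma I0_sub_K0: "k \<in> {..<n} \<times> {..<n} \<Longrightarrow> k \<in> {..<2*n} \<times> {..<(n::nat)}" by auto
lemma sh_in_K0: "k \<in> {..<n} \<times> {..<n} \<Longrightarrow> sh n k \<in> {..<2*n} \<times> {..<(n::nat)}" by (auto simp: sh_def)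

lemma meas_D:
  fixes \<mu> :: "real measure"
  assumes "sets \<mu> = sets borel" "i < n" "j < n"
  shows "(\<lambda>\<omega>. \<omega> (i,j) - \<omega> (sh n (i,j))) \<in> borel_measurable (PiM ({..<2*n} \<times> {..<n}) (\<lambda>_. \<mu>))"
  using assms by (intro borel_measurable_diff meas_comp) (auto simp: sh_def)

lemma symm_step:
  fixes \<mu> :: "real measure"
  assumes \<mu>: "prob_space \<mu>" "sets \<mu> = sets borel" and \<epsilon>: "\<epsilon> \<in> SE n"
  defines "Q \<equiv> PiM ({..<2*n} \<times> {..<n}) (\<lambda>_. \<mu>)"
  shows "(\<integral>\<^sup>+\<omega>. ennreal (norm_inf_2 n (\<lambda>k. \<omega> k - \<omega> (sh n k))) \<partial>Q)
       = (\<integral>\<^sup>+\<omega>. ennreal (norm_inf_2 n (signmat \<epsilon> (\<lambda>k. \<omega> k - \<omega> (sh n k)))) \<partial>Q)"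
proof -
  define K0 where "K0 = {..<2*n} \<times> {..<(n::nat)}"
  define g where "g = (\<lambda>\<omega>::nat\<times>nat\<Rightarrow>real. ennreal (norm_inf_2 n (\<lambda>k. \<omega> k - \<omega> (sh n k))))"
  have gm: "g \<in> borel_measurable Q"
    unfolding g_def Q_def using \<mu>(2)
    by (intro measurable_compose[OF _ measurable_ennreal] meas_norm_inf_2 meas_D) auto
  have "(\<integral>\<^sup>+\<omega>. g (\<lambda>k\<in>K0. \<omega> (piswap n \<epsilon> k)) \<partial>Q) = (\<integral>\<^sup>+\<omega>. g \<omega> \<partial>Q)"
    unfolding Q_def K0_def
    by (rule reindex_nn[OF \<mu>(1) piswap_inj]) (use piswap_in gm[unfolded Q_def] in auto)
  moreover have "g (\<lambda>k\<in>K0. \<omega> (piswap n \<epsilon> k)) = ennreal (norm_inf_2 n (signmat \<epsilon> (\<lambda>k. \<omega> k - \<omega> (sh n k))))" for \<omega>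
    unfolding g_def
  proof (intro arg_cong[where f=ennreal] norm_inf_2_cong)
    fix i j assume ij: "i < n" "j < n"
    have in1: "(i,j) \<in> K0" "(i + n, j) \<in> K0" unfolding K0_def using ij by auto
    show "(\<lambda>k\<in>K0. \<omega> (piswap n \<epsilon> k)) (i,j) - (\<lambda>k\<in>K0. \<omega> (piswap n \<epsilon> k)) (sh n (i,j))
        = signmat \<epsilon> (\<lambda>k. \<omega> k - \<omega> (sh n k)) (i,j)"
      using SE_sign[OF \<epsilon> ij] in1 ij by (auto simp: sh_def piswap_def signmat_def)
  qed
  ultimately show ?thesis unfolding g_def by simp
qed

lemma fold_step:
  fixes \<mu> :: "real measure"
  assumes \<mu>: "prob_space \<mu>" "sets \<mu> = sets borel" and int: "integrable \<mu> (\<lambda>x. x)"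
  defines "m \<equiv> integral\<^sup>L \<mu> (\<lambda>x. x)"
  shows "(\<integral>\<^sup>+A. ennreal (norm_inf_2 n (\<lambda>k. A k - m)) \<partial>PiM ({..<n}\<times>{..<n}) (\<lambda>_. \<mu>))
      \<le> (\<integral>\<^sup>+\<omega>. ennreal (norm_inf_2 n (\<lambda>k. \<omega> k - \<omega> (sh n k))) \<partial>PiM ({..<2*n}\<times>{..<n}) (\<lambda>_. \<mu>))"
proof -
  interpret PS: product_prob_space "\<lambda>_::nat\<times>nat. \<mu>" by (rule product_prob_spaceI) (rule \<mu>(1))
  define I0 where "I0 = {..<n} \<times> {..<(n::nat)}"
  define J0 where "J0 = sh n ` I0"
  have K: "{..<2*n} \<times> {..<n} = I0 \<union> J0" unfolding I0_def J0_def by (rule Kx_eq[symmetric])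
  have disj: "I0 \<inter> J0 = {}" unfolding I0_def J0_def by (rule IJ_disj)
  have fin: "finite I0" "finite J0" unfolding I0_def J0_def by auto
  define F where "F = (\<lambda>\<omega>::nat\<times>nat\<Rightarrow>real. ennreal (norm_inf_2 n (\<lambda>k. \<omega> k - \<omega> (sh n k))))"
  have Fm: "F \<in> borel_measurable (PiM (I0 \<union> J0) (\<lambda>_. \<mu>))"
    unfolding F_def K[symmetric] using \<mu>(2)
    by (intro measurable_compose[OF _ measurable_ennreal] meas_norm_inf_2 meas_D) auto
  have fold: "(\<integral>\<^sup>+\<omega>. F \<omega> \<partial>PiM (I0 \<union> J0) (\<lambda>_. \<mu>))
     = (\<integral>\<^sup>+x. (\<integral>\<^sup>+y. F (merge I0 J0 (x, y)) \<partial>PiM J0 (\<lambda>_. \<mu>)) \<partial>PiM I0 (\<lambda>_. \<mu>))"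
    by (rule PS.product_nn_integral_fold[OF disj fin Fm])
  have NP: "prob_space (PiM J0 (\<lambda>_. \<mu>))" by (rule prob_space_PiM) (use \<mu> in auto)
  have inner: "ennreal (norm_inf_2 n (\<lambda>k. x k - m)) \<le> (\<integral>\<^sup>+y. F (merge I0 J0 (x, y)) \<partial>PiM J0 (\<lambda>_. \<mu>))" for x
  proof -
    have "ennreal (norm_inf_2 n (\<lambda>k. x k - m)) \<le> (\<integral>\<^sup>+y. ennreal (norm_inf_2 n (\<lambda>k. x k - y (sh n k))) \<partial>PiM J0 (\<lambda>_. \<mu>))"
    proof (rule jensen_inner[OF NP])
      fix i j assume ij: "i < n" "j < n"
      have "sh n (i,j) \<in> J0" unfolding J0_def I0_def using ij by auto
      note mem = this
      show "integrable (PiM J0 (\<lambda>_. \<mu>)) (\<lambda>y. y (sh n (i,j)))"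
        by (rule comp_integral(1)[OF \<mu> mem int])
      show "integral\<^sup>L (PiM J0 (\<lambda>_. \<mu>)) (\<lambda>y. y (sh n (i,j))) = m"
        unfolding m_def by (rule comp_integral(2)[OF \<mu> mem int])
    qed
    also have "\<dots> = (\<integral>\<^sup>+y. F (merge I0 J0 (x, y)) \<partial>PiM J0 (\<lambda>_. \<mu>))"
    proof (intro nn_integral_cong)
      fix y
      have "norm_inf_2 n (\<lambda>k. x k - y (sh n k)) = norm_inf_2 n (\<lambda>k. merge I0 J0 (x, y) k - merge I0 J0 (x, y) (sh n k))"
      proof (rule norm_inf_2_cong)
        fix i j assume ij: "i < n" "j < n"
        have a: "(i,j) \<in> I0" unfolding I0_def using ij by auto
        have b: "sh n (i,j) \<in> J0" unfolding J0_def I0_def using ij by auto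
        show "x (i,j) - y (sh n (i,j)) = merge I0 J0 (x, y) (i,j) - merge I0 J0 (x, y) (sh n (i,j))"
          using a b disj by simp
      qed
      then show "ennreal (norm_inf_2 n (\<lambda>k. x k - y (sh n k))) = F (merge I0 J0 (x, y))"
        unfolding F_def by simp
    qed
    finally show ?thesis .
  qed
  have "(\<integral>\<^sup>+A. ennreal (norm_inf_2 n (\<lambda>k. A k - m)) \<partial>PiM I0 (\<lambda>_. \<mu>))
      \<le> (\<integral>\<^sup>+x. (\<integral>\<^sup>+y. F (merge I0 J0 (x, y)) \<partial>PiM J0 (\<lambda>_. \<mu>)) \<partial>PiM I0 (\<lambda>_. \<mu>))"
    by (intro nn_integral_mono inner)
  also have "\<dots> = (\<integral>\<^sup>+\<omega>. F \<omega> \<partial>PiM (I0 \<union> J0) (\<lambda>_. \<mu>))" by (rule fold[symmetric])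
  finally show ?thesis unfolding F_def K I0_def .
qed

lemma meas_P_g:
  fixes \<mu> :: "real measure"
  assumes "sets \<mu> = sets borel"
  shows "(\<lambda>A. ennreal (norm_2_inf n A)) \<in> borel_measurable (PiM ({..<n}\<times>{..<n}) (\<lambda>_. \<mu>))"
  using assms by (intro measurable_compose[OF _ measurable_ennreal] meas_norm_2_inf meas_comp) auto

lemma sym_bound:
  fixes \<mu> :: "real measure"
  assumes \<mu>: "prob_space \<mu>" "sets \<mu> = sets borel"
  shows "(\<integral>\<^sup>+\<omega>. ennreal (norm_inf_2 n (\<lambda>k. \<omega> k - \<omega> (sh n k))) \<partial>PiM ({..<2*n}\<times>{..<n}) (\<lambda>_. \<mu>))
      \<le> ennreal (8 * sqrt (real n)) * (\<integral>\<^sup>+A. ennreal (norm_2_inf n A) \<partial>PiM ({..<n}\<times>{..<n}) (\<lambda>_. \<mu>))"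
proof -
  define Q where "Q = PiM ({..<2*n}\<times>{..<n}) (\<lambda>_::nat\<times>nat. \<mu>)"
  define P where "P = PiM ({..<n}\<times>{..<n}) (\<lambda>_::nat\<times>nat. \<mu>)"
  define I0 where "I0 = {..<n} \<times> {..<(n::nat)}"
  define K0 where "K0 = {..<2*n} \<times> {..<(n::nat)}"
  define D where "D = (\<lambda>(\<omega>::nat\<times>nat\<Rightarrow>real) k. \<omega> k - \<omega> (sh n k))"
  define N where "N = real (card (SE n))"
  have N0: "0 < N" unfolding N_def using finite_SE SE_ne by (simp add: card_gt_0_iff)
  define c where "c = 4 * sqrt (real n)"
  have c0: "0 \<le> c" unfolding c_def by simp
  have mS: "(\<lambda>\<omega>. ennreal (norm_inf_2 n (signmat \<epsilon> (D \<omega>)))) \<in> borel_measurable Q" for \<epsilon>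
    unfolding Q_def D_def signmat_def using \<mu>(2)
    by (intro measurable_compose[OF _ measurable_ennreal] meas_norm_inf_2)
       (auto intro!: borel_measurable_times borel_measurable_const meas_D)
  have gm: "(\<lambda>A. ennreal (norm_2_inf n A)) \<in> borel_measurable P" unfolding P_def by (rule meas_P_g[OF \<mu>(2)])
  have top: "(\<integral>\<^sup>+\<omega>. ennreal (norm_2_inf n (\<lambda>k\<in>I0. \<omega> k)) \<partial>Q) = (\<integral>\<^sup>+A. ennreal (norm_2_inf n A) \<partial>P)"
    unfolding Q_def P_def I0_def
    by (rule reindex_nn[OF \<mu>(1), where f="\<lambda>k. k", simplified]) (use gm[unfolded P_def] in \<open>auto simp: inj_on_def\<close>)
  have bot: "(\<integral>\<^sup>+\<omega>. ennreal (norm_2_inf n (\<lambda>k\<in>I0. \<omega> (sh n k))) \<partial>Q) = (\<integral>\<^sup>+A. ennreal (norm_2_inf n A) \<partial>P)"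
    unfolding Q_def P_def I0_def
    by (rule reindex_nn[OF \<mu>(1) sh_inj]) (use gm[unfolded P_def] in \<open>auto simp: sh_def\<close>)
  have mtop: "(\<lambda>\<omega>. ennreal (norm_2_inf n (\<lambda>k\<in>I0. \<omega> k))) \<in> borel_measurable Q"
    unfolding Q_def I0_def using \<mu>(2)
    by (intro measurable_compose[OF _ measurable_ennreal] meas_norm_2_inf) (auto intro!: meas_comp)
  have mbot: "(\<lambda>\<omega>. ennreal (norm_2_inf n (\<lambda>k\<in>I0. \<omega> (sh n k)))) \<in> borel_measurable Q"
    unfolding Q_def I0_def using \<mu>(2)
    by (intro measurable_compose[OF _ measurable_ennreal] meas_norm_2_inf) (auto intro!: meas_comp simp: sh_def)
  have pt: "(\<Sum>\<epsilon>\<in>SE n. ennreal (norm_inf_2 n (signmat \<epsilon> (D \<omega>))))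
      \<le> ennreal N * (ennreal c * (ennreal (norm_2_inf n (\<lambda>k\<in>I0. \<omega> k)) + ennreal (norm_2_inf n (\<lambda>k\<in>I0. \<omega> (sh n k)))))" for \<omega>
  proof -
    have "(\<Sum>\<epsilon>\<in>SE n. ennreal (norm_inf_2 n (signmat \<epsilon> (D \<omega>)))) = ennreal (\<Sum>\<epsilon>\<in>SE n. norm_inf_2 n (signmat \<epsilon> (D \<omega>)))"
      by (rule sum_ennreal) (rule norm_inf_2_nonneg)
    also have "\<dots> \<le> ennreal (N * (c * norm_2_inf n (D \<omega>)))"
      using det_bound[of n "D \<omega>"] unfolding N_def c_def by (intro ennreal_leI) (simp add: mult_ac)
    also have "\<dots> \<le> ennreal (N * (c * (norm_2_inf n (\<lambda>k\<in>I0. \<omega> k) + norm_2_inf n (\<lambda>k\<in>I0. \<omega> (sh n k)))))"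
    proof (intro ennreal_leI mult_left_mono c0 N0[THEN less_imp_le])
      have "norm_2_inf n (D \<omega>) \<le> norm_2_inf n \<omega> + norm_2_inf n (\<lambda>k. \<omega> (sh n k))"
        unfolding D_def by (rule norm_2_inf_triangle)
      also have "norm_2_inf n \<omega> = norm_2_inf n (\<lambda>k\<in>I0. \<omega> k)" by (rule norm_2_inf_cong) (simp add: I0_def)
      also have "norm_2_inf n (\<lambda>k. \<omega> (sh n k)) = norm_2_inf n (\<lambda>k\<in>I0. \<omega> (sh n k))" by (rule norm_2_inf_cong) (simp add: I0_def)
      finally show "norm_2_inf n (D \<omega>) \<le> norm_2_inf n (\<lambda>k\<in>I0. \<omega> k) + norm_2_inf n (\<lambda>k\<in>I0. \<omega> (sh n k))" .
    qed
    also have "\<dots> = ennreal N * (ennreal c * (ennreal (norm_2_inf n (\<lambda>k\<in>I0. \<omega> k)) + ennreal (norm_2_inf n (\<lambda>k\<in>I0. \<omega> (sh n k)))))"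
      using N0 c0 norm_2_inf_nonneg by (simp add: ennreal_mult ennreal_plus[symmetric] del: ennreal_plus)
    finally show ?thesis .
  qed
  have "ennreal N * (\<integral>\<^sup>+\<omega>. ennreal (norm_inf_2 n (D \<omega>)) \<partial>Q) = (\<Sum>\<epsilon>\<in>SE n. \<integral>\<^sup>+\<omega>. ennreal (norm_inf_2 n (D \<omega>)) \<partial>Q)"
    unfolding N_def by (simp add: ennreal_of_nat_eq_real_of_nat)
  also have "\<dots> = (\<Sum>\<epsilon>\<in>SE n. \<integral>\<^sup>+\<omega>. ennreal (norm_inf_2 n (signmat \<epsilon> (D \<omega>))) \<partial>Q)"
    unfolding Q_def D_def by (intro sum.cong refl symm_step[OF \<mu>])
  also have "\<dots> = (\<integral>\<^sup>+\<omega>. (\<Sum>\<epsilon>\<in>SE n. ennreal (norm_inf_2 n (signmat \<epsilon> (D \<omega>)))) \<partial>Q)"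
    by (rule nn_integral_sum[symmetric]) (rule mS)
  also have "\<dots> \<le> (\<integral>\<^sup>+\<omega>. ennreal N * (ennreal c * (ennreal (norm_2_inf n (\<lambda>k\<in>I0. \<omega> k)) + ennreal (norm_2_inf n (\<lambda>k\<in>I0. \<omega> (sh n k))))) \<partial>Q)"
    by (intro nn_integral_mono pt)
  also have "\<dots> = ennreal N * (ennreal c * ((\<integral>\<^sup>+\<omega>. ennreal (norm_2_inf n (\<lambda>k\<in>I0. \<omega> k)) \<partial>Q) + (\<integral>\<^sup>+\<omega>. ennreal (norm_2_inf n (\<lambda>k\<in>I0. \<omega> (sh n k))) \<partial>Q)))"
    using mtop mbot by (simp add: nn_integral_cmult nn_integral_add)
  also have "\<dots> = ennreal N * (ennreal c * (2 * (\<integral>\<^sup>+A. ennreal (norm_2_inf n A) \<partial>P)))"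
    by (simp only: top bot mult_2)
  also have "\<dots> = ennreal N * (ennreal (8 * sqrt (real n)) * (\<integral>\<^sup>+A. ennreal (norm_2_inf n A) \<partial>P))"
  proof -
    have "ennreal (8 * sqrt (real n)) = ennreal (2 * (4 * sqrt (real n)))" by simp
    also have "\<dots> = ennreal 2 * ennreal (4 * sqrt (real n))" by (rule ennreal_mult) auto
    finally have e8: "ennreal (8 * sqrt (real n)) = 2 * ennreal c" unfolding c_def by simp
    show ?thesis unfolding e8 by (simp only: mult_ac)
  qed
  finally have "ennreal N * (\<integral>\<^sup>+\<omega>. ennreal (norm_inf_2 n (D \<omega>)) \<partial>Q) \<le> ennreal N * (ennreal (8 * sqrt (real n)) * (\<integral>\<^sup>+A. ennreal (norm_2_inf n A) \<partial>P))" .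
  then have "(\<integral>\<^sup>+\<omega>. ennreal (norm_inf_2 n (D \<omega>)) \<partial>Q) \<le> ennreal (8 * sqrt (real n)) * (\<integral>\<^sup>+A. ennreal (norm_2_inf n A) \<partial>P)"
    using N0 by (subst (asm) ennreal_mult_le_mult_iff) auto
  then show ?thesis unfolding D_def Q_def P_def .
qed


lemma sgn_mul_self: "sgn (m::real) * m = \<bar>m\<bar>"
  by (cases rule: linorder_cases[of m 0]) auto

lemma mean_step:
  fixes \<mu> :: "real measure"
  assumes \<mu>: "prob_space \<mu>" "sets \<mu> = sets borel" and int: "integrable \<mu> (\<lambda>x. x)"
  defines "m \<equiv> integral\<^sup>L \<mu> (\<lambda>x. x)"
  shows "ennreal (real n * sqrt (real n) * \<bar>m\<bar>)
      \<le> (\<integral>\<^sup>+A. ennreal (euclid_norm n (mat_vec n A (\<lambda>_. 1))) \<partial>PiM ({..<n}\<times>{..<n}) (\<lambda>_. \<mu>))"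
proof (cases "n = 0")
  case True then show ?thesis by simp
next
  case False
  define P where "P = PiM ({..<n}\<times>{..<n}) (\<lambda>_::nat\<times>nat. \<mu>)"
  have NP: "prob_space P" unfolding P_def by (rule prob_space_PiM) (use \<mu> in auto)
  have sn: "0 < sqrt (real n)" using False by simp
  define u where "u = (\<lambda>i::nat. sgn m / sqrt (real n))"
  have un: "euclid_norm n u \<le> 1"
  proof -
    have "(\<Sum>i<n. (u i)^2) = (sgn m)^2" unfolding u_def using False by (simp add: power_divide)
    also have "\<dots> \<le> 1" by (cases rule: linorder_cases[of m 0]) auto
    finally show ?thesis unfolding euclid_norm_def by simp
  qed
  have Bint: "integrable P (\<lambda>y. y (i,j))" if "i < n" "j < n" for i j
    unfolding P_def by (rule comp_integral(1)[OF \<mu> _ int]) (use that in auto)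
  have Bm: "integral\<^sup>L P (\<lambda>y. y (i,j)) = m" if "i < n" "j < n" for i j
    unfolding P_def m_def by (rule comp_integral(2)[OF \<mu> _ int]) (use that in auto)
  define L where "L = (\<lambda>y. \<Sum>i<n. (- u i) * mat_vec n (\<lambda>k. 0 - y k) (\<lambda>_. 1) i)"
  have Lint: "integrable P L" unfolding L_def
    by (rule linear_bound_integral(1)[where N=P and B="\<lambda>y. y" and m=m and n=n and u="\<lambda>i. - u i" and A="\<lambda>_. 0" and x="\<lambda>_. 1", OF NP Bint Bm])
  have "integral\<^sup>L P L = (\<Sum>i<n. (- u i) * mat_vec n (\<lambda>k. 0 - m) (\<lambda>_. 1) i)" unfolding L_def
    by (rule linear_bound_integral(2)[where N=P and B="\<lambda>y. y" and m=m and n=n and u="\<lambda>i. - u i" and A="\<lambda>_. 0" and x="\<lambda>_. 1", OF NP Bint Bm])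
  also have "\<dots> = real n * (real n * (sgn m * m)) / sqrt (real n)"
    unfolding u_def mat_vec_def by simp
  also have "\<dots> = real n * sqrt (real n) * \<bar>m\<bar>"
  proof -
    have "real n = sqrt (real n) * sqrt (real n)" by simp
    then show ?thesis using sn unfolding sgn_mul_self by (simp add: field_simps)
  qed
  finally have Lval: "integral\<^sup>L P L = real n * sqrt (real n) * \<bar>m\<bar>" .
  have "ennreal (real n * sqrt (real n) * \<bar>m\<bar>) \<le> (\<integral>\<^sup>+y. ennreal (L y) \<partial>P)"
    unfolding Lval[symmetric] by (rule ennreal_integral_le_nn[OF Lint])
  also have "\<dots> \<le> (\<integral>\<^sup>+A. ennreal (euclid_norm n (mat_vec n A (\<lambda>_. 1))) \<partial>P)"
  proof (intro nn_integral_mono ennreal_leI)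
    fix y
    have "L y = (\<Sum>i<n. u i * mat_vec n y (\<lambda>_. 1) i)"
      unfolding L_def mat_vec_def by (simp add: sum_negf)
    also have "\<dots> \<le> euclid_norm n (mat_vec n y (\<lambda>_. 1))" by (rule euclid_norm_ge_inner[OF un])
    finally show "L y \<le> euclid_norm n (mat_vec n y (\<lambda>_. 1))" .
  qed
  finally show ?thesis unfolding P_def .
qed


lemma norm_inf_2_zero: "norm_inf_2 0 A = 0"
  unfolding norm_inf_2_def euclid_norm_def by (simp add: image_constant_conv)

lemma norm_2_inf_ge_entry: "0 < n \<Longrightarrow> \<bar>A (0,0)\<bar> \<le> norm_2_inf n A"
proof -
  assume n: "0 < n"
  have "\<bar>A (0,0)\<bar> = sqrt ((A (0,0))^2)" by simp
  also have "\<dots> \<le> sqrt (\<Sum>j<n. (A (0,j))^2)"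
    using n by (intro real_sqrt_le_mono member_le_sum[where f="\<lambda>j. (A (0,j))^2"]) auto
  also have "\<dots> \<le> norm_2_inf n A" unfolding norm_2_inf_def euclid_norm_def using n by (intro Max_ge) auto
  finally show ?thesis .
qed

theorem mainTheorem8:
  shows "\<exists>C::real. C > 0 \<and>
    (\<forall>(n::nat) (\<mu>::real measure). prob_space \<mu> \<longrightarrow> sets \<mu> = sets borel \<longrightarrow>
      (\<integral>\<^sup>+ A. ennreal (norm_inf_2 n A) \<partial>iid_matrix n \<mu>)
        \<le> ennreal (C * sqrt (real n)) * (\<integral>\<^sup>+ A. ennreal (norm_2_inf n A) \<partial>iid_matrix n \<mu>)
          + ennreal C * (\<integral>\<^sup>+ A. ennreal (euclid_norm n (mat_vec n A (\<lambda>_. 1))) \<partial>iid_matrix n \<mu>))"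
proof (intro exI[of _ 8] conjI allI impI)
  show "(0::real) < 8" by simp
next
  fix n :: nat and \<mu> :: "real measure"
  assume \<mu>1: "prob_space \<mu>" and \<mu>2: "sets \<mu> = sets borel"
  note \<mu> = \<mu>1 \<mu>2
  define P where "P = PiM ({..<n}\<times>{..<n}) (\<lambda>_::nat\<times>nat. \<mu>)"
  have P: "iid_matrix n \<mu> = P" unfolding iid_matrix_def P_def ..
  define G where "G = (\<integral>\<^sup>+ A. ennreal (norm_2_inf n A) \<partial>P)"
  define H where "H = (\<integral>\<^sup>+ A. ennreal (euclid_norm n (mat_vec n A (\<lambda>_. 1))) \<partial>P)"
  show "(\<integral>\<^sup>+ A. ennreal (norm_inf_2 n A) \<partial>iid_matrix n \<mu>)
        \<le> ennreal (8 * sqrt (real n)) * (\<integral>\<^sup>+ A. ennreal (norm_2_inf n A) \<partial>iid_matrix n \<mu>)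
          + ennreal 8 * (\<integral>\<^sup>+ A. ennreal (euclid_norm n (mat_vec n A (\<lambda>_. 1))) \<partial>iid_matrix n \<mu>)"
  proof (cases "n = 0")
    case True
    then show ?thesis by (simp add: norm_inf_2_zero)
  next
    case False
    then have n: "0 < n" by simp
    show ?thesis
    proof (cases "integrable \<mu> (\<lambda>x. x)")
      case int: True
      define m where "m = integral\<^sup>L \<mu> (\<lambda>x. x)"
      define c where "c = real n * sqrt (real n) * \<bar>m\<bar>"
      have c0: "0 \<le> c" unfolding c_def by simp
      interpret PP: prob_space P unfolding P_def by (rule prob_space_PiM) (use \<mu> in auto)
      have fm: "(\<lambda>A. ennreal (norm_inf_2 n (\<lambda>k. A k - m))) \<in> borel_measurable P"
        unfolding P_def using \<mu>2
        by (intro measurable_compose[OF _ measurable_ennreal] meas_norm_inf_2)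
           (auto intro!: borel_measurable_diff meas_comp)
      have "(\<integral>\<^sup>+ A. ennreal (norm_inf_2 n A) \<partial>P) \<le> (\<integral>\<^sup>+ A. ennreal (norm_inf_2 n (\<lambda>k. A k - m)) + ennreal c \<partial>P)"
        unfolding c_def
        by (intro nn_integral_mono) (simp add: ennreal_plus[symmetric] norm_inf_2_nonneg mean_shift_bound del: ennreal_plus)
      also have "\<dots> = (\<integral>\<^sup>+ A. ennreal (norm_inf_2 n (\<lambda>k. A k - m)) \<partial>P) + ennreal c"
        using fm by (simp add: nn_integral_add PP.emeasure_space_1)
      also have "\<dots> \<le> ennreal (8 * sqrt (real n)) * G + H"
      proof (rule add_mono)
        show "(\<integral>\<^sup>+ A. ennreal (norm_inf_2 n (\<lambda>k. A k - m)) \<partial>P) \<le> ennreal (8 * sqrt (real n)) * G"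
          unfolding P_def G_def m_def using fold_step[OF \<mu> int, of n] sym_bound[OF \<mu>, of n] by (rule order_trans)
        show "ennreal c \<le> H" unfolding c_def H_def P_def m_def by (rule mean_step[OF \<mu> int])
      qed
      also have "\<dots> \<le> ennreal (8 * sqrt (real n)) * G + ennreal 8 * H"
      proof -
        have "H = ennreal 1 * H" by simp
        also have "\<dots> \<le> ennreal 8 * H" by (intro mult_right_mono ennreal_leI) auto
        finally show ?thesis by (rule add_left_mono)
      qed
      finally show ?thesis unfolding P G_def H_def .
    next
      case nint: False
      have idm: "(\<lambda>x::real. x) \<in> borel_measurable \<mu>" by (rule measurable_ident_sets[OF \<mu>2])
      have "\<not> ((\<integral>\<^sup>+x. ennreal (norm x) \<partial>\<mu>) < \<infinity>)"
        using nint idm by (simp add: integrable_iff_bounded)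
      then have inf: "(\<integral>\<^sup>+x. ennreal \<bar>x\<bar> \<partial>\<mu>) = \<infinity>" using top.not_eq_extremum by fastforce
      have "(\<integral>\<^sup>+x. ennreal \<bar>x\<bar> \<partial>\<mu>) = (\<integral>\<^sup>+A. ennreal \<bar>A (0,0)\<bar> \<partial>P)"
        unfolding P_def by (rule nn_comp[OF \<mu>, symmetric]) (use n in auto)
      also have "\<dots> \<le> G" unfolding G_def
        by (intro nn_integral_mono ennreal_leI norm_2_inf_ge_entry n)
      finally have "G = \<infinity>" using inf by (simp add: top_unique)
      moreover have "ennreal (8 * sqrt (real n)) \<noteq> 0" using n by simp
      ultimately have "ennreal (8 * sqrt (real n)) * G = \<infinity>" by (simp add: ennreal_mult_top)
      then show ?thesis unfolding P G_def by simp
    qed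
  qed
qed


end
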